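(* Let $n\ge1$ and $|\psi\rangle=\sum_{k=0}^n d_k|D^n_k\rangle$ with $d_k\in\mathbb{C}$ and $d_0\neq0$. For $y\in\mathbb{C}$ and $x_1,\dots,x_n\in\mathbb{C}$ let $A_0=y\,\mathbb{1}_n$ and $A_1=\mathrm{diag}(x_1,\dots,x_n)$. Then $|\psi\rangle=\sum_{(i_1,\dots,i_n)\in\{0,1\}^n}\mathrm{Tr}[A_{i_1}\cdots A_{i_n}]\,|i_1\cdots i_n\rangle$ if and only if $y^n=d_0/n$ and $x_1^k+\cdots+x_n^k=\dfrac{d_k}{y^{n-k}\sqrt{\binom nk}}$ for all $k=1,\dots,n$ (in particular $x_1^n+\cdots+x_n^n=d_n$). Consequently, for any $y$ with $y^n=d_0/n$, the corresponding $x_1,\dots,x_n$ are exactly (up to permutation) the roots, with multiplicity, of $P(X)=\sum_{m=0}^n\frac{n!}{m!}Q_m(\boldsymbol z)X^{n-m}$ with $z_k=\dfrac{d_k}{y^{n-k}\sqrt{\binom nk}}$.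
   Context: $|D^n_k\rangle=\binom nk^{-1/2}\sum_{\vec i\in\{0,1\}^n,\ \sum_j i_j=k}|\vec i\rangle$ is the normalized $n$-qubit Dicke state with $k$ excitations, and $|i_1\cdots i_n\rangle$ is the computational basis. For $m\ge1$, a partition $\boldsymbol\lambda\vdash m$ is written $(\lambda_1^{\mu_1},\dots,\lambda_k^{\mu_k})$ with distinct parts $\lambda_1>\cdots>\lambda_k\ge1$ of multiplicities $\mu_i\ge1$, $\sum\mu_i\lambda_i=m$; $Q_m(\boldsymbol z)=\sum_{\boldsymbol\lambda\vdash m}\xi_{\boldsymbol\lambda}\prod_{i=1}^kz_{\lambda_i}^{\mu_i}$ with $\xi_{\boldsymbol\lambda}=m!\prod_{i=1}^k\frac{(-1)^{\mu_i}}{\mu_i!\lambda_i^{\mu_i}}$, and $Q_0:=1$. *)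

theory Defs
  imports "HOL-Computational_Algebra.Polynomial" "HOL-Library.Multiset" "Jordan_Normal_Form.Matrix"
begin

text \<open>Computational basis vectors |i_1...i_n> of n qubits are lists of length n over {0,1};
  a state is its amplitude function on these lists.\<close>

definition basis_strings :: "nat \<Rightarrow> nat list set" where
  "basis_strings n = {is. length is = n \<and> set is \<subseteq> {0,1}}"

definition dicke :: "nat \<Rightarrow> nat \<Rightarrow> nat list \<Rightarrow> complex" where
  "dicke n k is = (if sum_list is = k then complex_of_real (1 / sqrt (real (n choose k))) else 0)"

definition dicke_sup :: "nat \<Rightarrow> (nat \<Rightarrow> complex) \<Rightarrow> nat list \<Rightarrow> complex" where
  "dicke_sup n d is = (\<Sum>k=0..n. d k * dicke n k is)"

definition mat_trace :: "'a::comm_ring_1 mat \<Rightarrow> 'a" where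
  "mat_trace A = (\<Sum>i<dim_row A. A $$ (i,i))"

text \<open>A_0 = y 1_n, A_1 = diag(x_1,...,x_n) (matrix indices are 0-based, so entry (i,i) is x (i+1)).\<close>
definition A0 :: "nat \<Rightarrow> complex \<Rightarrow> complex mat" where
  "A0 n y = y \<cdot>\<^sub>m 1\<^sub>m n"

definition A1 :: "nat \<Rightarrow> (nat \<Rightarrow> complex) \<Rightarrow> complex mat" where
  "A1 n x = mat n n (\<lambda>(i,j). if i = j then x (Suc i) else 0)"

definition A_of :: "nat \<Rightarrow> complex \<Rightarrow> (nat \<Rightarrow> complex) \<Rightarrow> nat \<Rightarrow> complex mat" where
  "A_of n y x b = (if b = 0 then A0 n y else A1 n x)"

definition mps_amp :: "nat \<Rightarrow> complex \<Rightarrow> (nat \<Rightarrow> complex) \<Rightarrow> nat list \<Rightarrow> complex" where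
  "mps_amp n y x is = mat_trace (foldr (\<lambda>b M. A_of n y x b * M) is (1\<^sub>m n))"

definition partitions :: "nat \<Rightarrow> nat multiset set" where
  "partitions m = {lam. (\<forall>p\<in>#lam. p \<ge> 1) \<and> sum_mset lam = m}"

definition xi :: "nat \<Rightarrow> nat multiset \<Rightarrow> complex" where
  "xi m lam = fact m * (\<Prod>p\<in>set_mset lam.
      (-1) ^ count lam p / (fact (count lam p) * of_nat p ^ count lam p))"

definition Q :: "nat \<Rightarrow> (nat \<Rightarrow> complex) \<Rightarrow> complex" where
  "Q m z = (if m = 0 then 1 else
      (\<Sum>lam\<in>partitions m. xi m lam * (\<Prod>p\<in>set_mset lam. z p ^ count lam p)))"

definition Ppoly :: "nat \<Rightarrow> (nat \<Rightarrow> complex) \<Rightarrow> complex poly" where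
  "Ppoly n z = (\<Sum>m=0..n. monom (fact n / fact m * Q m z) (n - m))"

end

theory Submission
  imports Defs "HOL-Computational_Algebra.Formal_Power_Series" "HOL-Computational_Algebra.Polynomial_FPS"
   "HOL-Computational_Algebra.Fundamental_Theorem_Algebra"
begin


definition gg :: "(nat \<Rightarrow> complex) \<Rightarrow> nat \<Rightarrow> nat \<Rightarrow> complex" where
  "gg z p u = (- z p / of_nat p) ^ u / fact u"

definition ww :: "(nat \<Rightarrow> complex) \<Rightarrow> nat multiset \<Rightarrow> complex" where
  "ww z lam = (\<Prod>p\<in>set_mset lam. gg z p (count lam p))"

definition PS :: "nat \<Rightarrow> nat \<Rightarrow> nat multiset set" where
  "PS j m = {lam. set_mset lam \<subseteq> {1..j} \<and> sum_mset lam = m}"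

definition RR :: "(nat \<Rightarrow> complex) \<Rightarrow> nat \<Rightarrow> nat \<Rightarrow> complex" where
  "RR z j m = (\<Sum>lam\<in>PS j m. ww z lam)"

lemma mem_le_sum: "(p::nat) \<in># lam \<Longrightarrow> p \<le> sum_mset lam"
  by (induction lam) auto

lemma size_le_sum_mset: "(\<forall>p\<in>#lam. p \<ge> 1) \<Longrightarrow> size lam \<le> sum_mset (lam::nat multiset)"
proof (induction lam)
  case empty then show ?case by simp
next
  case (add x lam) then show ?case by auto
qed

lemma finite_PS: "finite (PS j m)"
proof -
  have "PS j m \<subseteq> (\<Union>s\<in>{0..m}. multisets_of_size {1..j} s)"
  proof
    fix lam assume "lam \<in> PS j m"
    then have "set_mset lam \<subseteq> {1..j}" "sum_mset lam = m" by (auto simp: PS_def)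
    moreover have "size lam \<le> m" using size_le_sum_mset[of lam] calculation by force
    ultimately show "lam \<in> (\<Union>s\<in>{0..m}. multisets_of_size {1..j} s)"
      unfolding multisets_of_size_def by auto
  qed
  then show ?thesis by (rule finite_subset) auto
qed

lemma PS_0: "PS 0 m = (if m = 0 then {{#}} else {})"
  unfolding PS_def by auto

lemma RR_0: "RR z 0 m = (if m = 0 then 1 else 0)"
  by (simp add: RR_def PS_0 ww_def)

lemma PS_big: assumes "m \<le> j" shows "PS j m = PS m m"
proof -
  have "set_mset lam \<subseteq> {1..j} \<longleftrightarrow> set_mset lam \<subseteq> {1..m}" if "sum_mset lam = m" for lam
  proof
    assume "set_mset lam \<subseteq> {1..j}"
    moreover have "p \<le> m" if "p \<in># lam" for p using mem_le_sum[OF that] \<open>sum_mset lam = m\<close> by simp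
    ultimately show "set_mset lam \<subseteq> {1..m}" by force
  next
    assume "set_mset lam \<subseteq> {1..m}"
    then show "set_mset lam \<subseteq> {1..j}" using assms by force
  qed
  then show ?thesis unfolding PS_def by blast
qed

lemma partitions_PS: "partitions m = PS m m"
proof -
  have "(\<forall>p\<in>#lam. p \<ge> 1) \<longleftrightarrow> set_mset lam \<subseteq> {1..m}" if "sum_mset lam = m" for lam
  proof
    assume "\<forall>p\<in>#lam. p \<ge> 1"
    moreover have "p \<le> m" if "p \<in># lam" for p using mem_le_sum[OF that] \<open>sum_mset lam = m\<close> by simp
    ultimately show "set_mset lam \<subseteq> {1..m}" by force
  next
    assume "set_mset lam \<subseteq> {1..m}"
    then show "\<forall>p\<in>#lam. p \<ge> 1" by force
  qed
  then show ?thesis unfolding PS_def partitions_def by blast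
qed

lemma Q_RR: "Q m z = fact m * RR z m m"
proof (cases "m = 0")
  case True
  then show ?thesis by (simp add: Q_def RR_def PS_0 ww_def)
next
  case False
  have *: "xi m lam * (\<Prod>p\<in>set_mset lam. z p ^ count lam p) = fact m * ww z lam" for lam
  proof -
    have "xi m lam * (\<Prod>p\<in>set_mset lam. z p ^ count lam p) =
      fact m * ((\<Prod>p\<in>set_mset lam. (-1) ^ count lam p / (fact (count lam p) * of_nat p ^ count lam p)) * (\<Prod>p\<in>set_mset lam. z p ^ count lam p))"
      unfolding xi_def by (simp only: mult.assoc)
    also have "\<dots> = fact m * (\<Prod>p\<in>set_mset lam. (-1) ^ count lam p / (fact (count lam p) * of_nat p ^ count lam p) * z p ^ count lam p)"
      by (simp only: prod.distrib)
    also have "\<dots> = fact m * ww z lam"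
      unfolding ww_def
    proof (intro arg_cong[where f="\<lambda>x. fact m * x"] prod.cong refl)
      fix p assume "p \<in> set_mset lam"
      define c where "c = count lam p"
      have "(- z p / of_nat p) ^ c = (- z p) ^ c / of_nat p ^ c" by (rule power_divide)
      also have "(- z p) ^ c = (-1)^c * z p ^ c" by (rule power_minus)
      finally have "(- z p / of_nat p) ^ c = (-1)^c * z p ^ c / of_nat p ^ c" .
      then show "(-1) ^ count lam p / (fact (count lam p) * of_nat p ^ count lam p) * z p ^ count lam p =
          gg z p (count lam p)" unfolding gg_def c_def[symmetric] by simp
    qed
    finally show ?thesis .
  qed
  have "Q m z = (\<Sum>lam\<in>partitions m. xi m lam * (\<Prod>p\<in>set_mset lam. z p ^ count lam p))"
    using False by (simp only: Q_def if_False)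
  also have "\<dots> = (\<Sum>lam\<in>PS m m. fact m * ww z lam)" unfolding partitions_PS * ..
  also have "\<dots> = fact m * RR z m m" unfolding RR_def sum_distrib_left ..
  finally show ?thesis .
qed



lemma sum_mset_split: "sum_mset (b::nat multiset) = count b p * p + sum_mset {#q \<in># b. q \<noteq> p#}"
proof -
  have e: "b = {#q \<in># b. q = p#} + {#q \<in># b. \<not> q = p#}" by (rule multiset_partition)
  have "sum_mset b = sum_mset ({#q \<in># b. q = p#} + {#q \<in># b. \<not> q = p#})"
    using arg_cong[OF e, of sum_mset] .
  also have "\<dots> = sum_mset {#q \<in># b. q = p#} + sum_mset {#q \<in># b. q \<noteq> p#}"
    by (rule sum_mset.union)
  also have "sum_mset {#q \<in># b. q = p#} = count b p * p"
    unfolding filter_eq_replicate_mset by simp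
  finally show ?thesis .
qed

lemma count_mul_le_sum: "count lam p * p \<le> sum_mset (lam::nat multiset)"
  using sum_mset_split[of lam p] by linarith

lemma ww_add: assumes "p \<notin># lam'"
  shows "ww z (replicate_mset u p + lam') = gg z p u * ww z lam'"
proof (cases "u = 0")
  case True then show ?thesis by (simp add: gg_def)
next
  case False
  have s: "set_mset (replicate_mset u p + lam') = insert p (set_mset lam')" using False by simp
  have c: "count (replicate_mset u p + lam') p = u" using assms by (simp add: not_in_iff)
  have "ww z (replicate_mset u p + lam') = gg z p u * (\<Prod>q\<in>set_mset lam'. gg z q (count (replicate_mset u p + lam') q))"
    unfolding ww_def s using assms c by (simp add: prod.insert)
  also have "(\<Prod>q\<in>set_mset lam'. gg z q (count (replicate_mset u p + lam') q)) = ww z lam'"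
    unfolding ww_def by (intro prod.cong refl) (use assms in auto)
  finally show ?thesis .
qed

lemma RR_Suc_inner:
  assumes "Suc j * u \<le> m"
  shows "(\<Sum>lam\<in>{lam. lam \<in> PS (Suc j) m \<and> count lam (Suc j) = u}. ww z lam)
       = gg z (Suc j) u * RR z j (m - Suc j * u)"
proof -
  let ?S = "PS j (m - Suc j * u)"
  let ?T = "{lam. lam \<in> PS (Suc j) m \<and> count lam (Suc j) = u}"
  have "(\<Sum>lam\<in>?S. gg z (Suc j) u * ww z lam) = (\<Sum>lam\<in>?T. ww z lam)"
  proof (rule sum.reindex_bij_witness[of ?S "\<lambda>lam. {#q \<in># lam. q \<noteq> Suc j#}" "\<lambda>lam'. replicate_mset u (Suc j) + lam'"])
    fix a assume a: "a \<in> ?S"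
    then have "Suc j \<notin># a" by (auto simp: PS_def)
    then show "{#q \<in># replicate_mset u (Suc j) + a. q \<noteq> Suc j#} = a"
      by (intro multiset_eqI) (simp add: not_in_iff)
  next
    fix a assume a: "a \<in> ?S"
    then have na: "Suc j \<notin># a" and sa: "set_mset a \<subseteq> {1..j}" and su: "sum_mset a = m - Suc j * u"
      by (auto simp: PS_def)
    have "set_mset (replicate_mset u (Suc j) + a) \<subseteq> {1..Suc j}" using sa by auto
    moreover have "sum_mset (replicate_mset u (Suc j) + a) = m" using su assms by simp
    moreover have "count (replicate_mset u (Suc j) + a) (Suc j) = u" using na by (simp add: not_in_iff)
    ultimately show "replicate_mset u (Suc j) + a \<in> ?T" by (simp add: PS_def)
  next
    fix b assume b: "b \<in> ?T"
    have "b = {#q \<in># b. q = Suc j#} + {#q \<in># b. \<not> q = Suc j#}" by (rule multiset_partition)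
    moreover have "{#q \<in># b. q = Suc j#} = replicate_mset u (Suc j)"
      using b by (simp add: filter_eq_replicate_mset)
    ultimately show "replicate_mset u (Suc j) + {#q \<in># b. q \<noteq> Suc j#} = b" by simp
  next
    fix b assume b: "b \<in> ?T"
    then have sb: "set_mset b \<subseteq> {1..Suc j}" and sum: "sum_mset b = m" and cb: "count b (Suc j) = u"
      by (auto simp: PS_def)
    have "set_mset {#q \<in># b. q \<noteq> Suc j#} \<subseteq> {1..j}" using sb by auto
    moreover have "sum_mset b = Suc j * u + sum_mset {#q \<in># b. q \<noteq> Suc j#}"
      using sum_mset_split[of b "Suc j"] cb by (simp only: mult.commute)
    then have "sum_mset {#q \<in># b. q \<noteq> Suc j#} = m - Suc j * u" using sum by simp
    ultimately show "{#q \<in># b. q \<noteq> Suc j#} \<in> ?S" by (simp add: PS_def)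
  next
    fix a assume a: "a \<in> ?S"
    then have "Suc j \<notin># a" by (auto simp: PS_def)
    then show "ww z (replicate_mset u (Suc j) + a) = gg z (Suc j) u * ww z a" by (rule ww_add)
  qed
  then show ?thesis unfolding RR_def sum_distrib_left by simp
qed

lemma RR_Suc_inner0:
  assumes "\<not> Suc j * u \<le> m"
  shows "{lam. lam \<in> PS (Suc j) m \<and> count lam (Suc j) = u} = {}"
proof -
  have "count lam (Suc j) * Suc j \<le> m" if "lam \<in> PS (Suc j) m" for lam
    using count_mul_le_sum[of lam "Suc j"] that by (simp add: PS_def)
  then show ?thesis using assms by (auto simp: mult.commute)
qed

lemma RR_Suc: "RR z (Suc j) m = (\<Sum>u=0..m. if Suc j * u \<le> m then gg z (Suc j) u * RR z j (m - Suc j * u) else 0)"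
proof -
  have img: "(\<lambda>lam. count lam (Suc j)) ` PS (Suc j) m \<subseteq> {0..m}"
  proof
    fix c assume "c \<in> (\<lambda>lam. count lam (Suc j)) ` PS (Suc j) m"
    then obtain lam where "lam \<in> PS (Suc j) m" "c = count lam (Suc j)" by blast
    moreover have "c \<le> c * Suc j" by simp
    ultimately show "c \<in> {0..m}" using count_mul_le_sum[of lam "Suc j"] unfolding PS_def by simp
  qed
  have "RR z (Suc j) m = (\<Sum>u=0..m. \<Sum>lam\<in>{lam. lam \<in> PS (Suc j) m \<and> count lam (Suc j) = u}. ww z lam)"
    unfolding RR_def by (rule sum.group[OF finite_PS finite_atLeastAtMost img, symmetric])
  also have "\<dots> = (\<Sum>u=0..m. if Suc j * u \<le> m then gg z (Suc j) u * RR z j (m - Suc j * u) else 0)"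
    by (intro sum.cong refl) (simp add: RR_Suc_inner RR_Suc_inner0)
  finally show ?thesis .
qed



definition FF :: "(nat \<Rightarrow> complex) \<Rightarrow> nat \<Rightarrow> complex fps" where
  "FF z j = Abs_fps (RR z j)"
definition EE :: "(nat \<Rightarrow> complex) \<Rightarrow> nat \<Rightarrow> complex fps" where
  "EE z p = Abs_fps (\<lambda>i. if p dvd i then gg z p (i div p) else 0)"
definition ZZ :: "(nat \<Rightarrow> complex) \<Rightarrow> nat \<Rightarrow> complex fps" where
  "ZZ z j = Abs_fps (\<lambda>i. if i < j then z (Suc i) else 0)"

lemma sum_dvd_reindex:
  fixes F :: "nat \<Rightarrow> complex"
  assumes p: "0 < p"
  shows "(\<Sum>i=0..m. if p dvd i then F (i div p) else 0) = (\<Sum>u=0..m. if p * u \<le> m then F u else 0)"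
proof -
  have "(\<Sum>i=0..m. if p dvd i then F (i div p) else 0) = (\<Sum>i\<in>{i\<in>{0..m}. p dvd i}. F (i div p))"
    by (rule sum.inter_filter[symmetric]) simp
  also have "{i\<in>{0..m}. p dvd i} = (\<lambda>u. p * u) ` {u\<in>{0..m}. p * u \<le> m}"
  proof (intro equalityI subsetI)
    fix i assume "i \<in> {i\<in>{0..m}. p dvd i}"
    then obtain u where u: "i = p * u" "i \<le> m" by auto
    have "u \<le> p * u" using p by simp
    then have "u \<le> m" using u by linarith
    then show "i \<in> (\<lambda>u. p * u) ` {u\<in>{0..m}. p * u \<le> m}" using u by (intro image_eqI[of _ _ u]) auto
  next
    fix i assume "i \<in> (\<lambda>u. p * u) ` {u\<in>{0..m}. p * u \<le> m}"
    then show "i \<in> {i\<in>{0..m}. p dvd i}" by auto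
  qed
  also have "(\<Sum>i\<in>(\<lambda>u. p * u) ` {u\<in>{0..m}. p * u \<le> m}. F (i div p)) = (\<Sum>u\<in>{u\<in>{0..m}. p * u \<le> m}. F (p * u div p))"
    using sum.reindex[of "\<lambda>u. p * u" "{u\<in>{0..m}. p * u \<le> m}" "\<lambda>i. F (i div p)"] p
    by (simp add: inj_on_def comp_def)
  also have "\<dots> = (\<Sum>u\<in>{u\<in>{0..m}. p * u \<le> m}. F u)" using p by simp
  also have "\<dots> = (\<Sum>u=0..m. if p * u \<le> m then F u else 0)"
    by (rule sum.inter_filter) simp
  finally show ?thesis .
qed

lemma FF_0: "FF z 0 = 1"
  by (rule fps_ext) (simp add: FF_def RR_0)

lemma FF_Suc: "FF z (Suc j) = EE z (Suc j) * FF z j"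
proof (rule fps_ext)
  fix m
  have "fps_nth (EE z (Suc j) * FF z j) m = (\<Sum>i=0..m. (if Suc j dvd i then gg z (Suc j) (i div Suc j) else 0) * RR z j (m - i))"
    by (simp add: fps_mult_nth EE_def FF_def)
  also have "\<dots> = (\<Sum>i=0..m. if Suc j dvd i then gg z (Suc j) (i div Suc j) * RR z j (m - Suc j * (i div Suc j)) else 0)"
  proof (intro sum.cong refl)
    fix i assume "i \<in> {0..m}"
    show "(if Suc j dvd i then gg z (Suc j) (i div Suc j) else 0) * RR z j (m - i) =
      (if Suc j dvd i then gg z (Suc j) (i div Suc j) * RR z j (m - Suc j * (i div Suc j)) else 0)"
    proof (cases "Suc j dvd i")
      case True
      then have "Suc j * (i div Suc j) = i" by (rule dvd_mult_div_cancel)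
      then show ?thesis using True by simp
    qed simp
  qed
  also have "\<dots> = (\<Sum>u=0..m. if Suc j * u \<le> m then gg z (Suc j) u * RR z j (m - Suc j * u) else 0)"
    by (rule sum_dvd_reindex[of "Suc j" "\<lambda>u. gg z (Suc j) u * RR z j (m - Suc j * u)"]) simp
  also have "\<dots> = fps_nth (FF z (Suc j)) m" by (simp add: FF_def RR_Suc)
  finally show "fps_nth (FF z (Suc j)) m = fps_nth (EE z (Suc j) * FF z j) m" by simp
qed

lemma gg_step:
  assumes p: "0 < p"
  shows "of_nat (p * Suc v) * gg z p (Suc v) = - z p * gg z p v"
proof -
  have pz: "(of_nat p :: complex) \<noteq> 0" using p by simp
  have "of_nat (p * Suc v) * gg z p (Suc v) = of_nat p * of_nat (Suc v) * ((- z p / of_nat p) * (- z p / of_nat p) ^ v / (of_nat (Suc v) * fact v))"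
    unfolding gg_def by (simp only: power_Suc fact_Suc of_nat_mult)
  also have "\<dots> = (of_nat p * (- z p / of_nat p)) * ((- z p / of_nat p) ^ v / fact v)"
    by (simp add: field_simps del: of_nat_Suc)
  also have "of_nat p * (- z p / of_nat p) = - z p" using pz by simp
  finally show ?thesis unfolding gg_def by simp
qed

lemma EE_deriv:
  assumes p: "0 < p"
  shows "fps_deriv (EE z p) = - (fps_const (z p) * (fps_X ^ (p - 1) * EE z p))"
proof (rule fps_ext)
  fix i
  have rhs: "fps_nth (- (fps_const (z p) * (fps_X ^ (p - 1) * EE z p))) i =
     - z p * (if i < p - 1 then 0 else if p dvd (i - (p - 1)) then gg z p ((i - (p - 1)) div p) else 0)"
    by (simp add: fps_X_power_mult_nth EE_def)
  have lhs: "fps_nth (fps_deriv (EE z p)) i = of_nat (i + 1) * (if p dvd (i + 1) then gg z p ((i + 1) div p) else 0)"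
    by (simp add: EE_def)
  show "fps_nth (fps_deriv (EE z p)) i = fps_nth (- (fps_const (z p) * (fps_X ^ (p - 1) * EE z p))) i"
  proof (cases "p dvd (i + 1)")
    case True
    then obtain u where u: "i + 1 = p * u" by blast
    then have "u \<noteq> 0" by (cases u) auto
    then obtain v where v: "u = Suc v" by (cases u) auto
    have ge: "\<not> i < p - 1" using u v by (simp add: algebra_simps)
    have "i - (p - 1) = p * v" using u v p by (simp add: algebra_simps)
    then have "p dvd (i - (p - 1))" "(i - (p - 1)) div p = v" using p by auto
    then have "fps_nth (- (fps_const (z p) * (fps_X ^ (p - 1) * EE z p))) i = - z p * gg z p v"
      using rhs ge by simp
    also have "\<dots> = of_nat (p * Suc v) * gg z p (Suc v)" using gg_step[OF p] by simp
    also have "\<dots> = fps_nth (fps_deriv (EE z p)) i"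
    proof -
      have d: "(i + 1) div p = Suc v" using u v p by simp
      have f1: "fps_nth (fps_deriv (EE z p)) i = of_nat (i + 1) * gg z p (Suc v)"
        using lhs True by (simp only: d if_True)
      have "i + 1 = p * Suc v" using u v by simp
      then have f2: "(of_nat (i + 1) :: complex) = of_nat (p * Suc v)" by (rule arg_cong)
      show ?thesis by (simp only: f1 f2)
    qed
    finally show ?thesis by simp
  next
    case False
    have "\<not> p dvd (i - (p - 1))" if "\<not> i < p - 1"
    proof
      assume "p dvd (i - (p - 1))"
      then have "p dvd (i - (p - 1) + p)" by simp
      moreover have "i - (p - 1) + p = i + 1" using that p by simp
      ultimately show False using False by simp
    qed
    then show ?thesis using lhs rhs False by auto
  qed
qed

lemma ZZ_Suc: "ZZ z (Suc j) = ZZ z j + fps_const (z (Suc j)) * fps_X ^ j"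
  by (rule fps_ext) (auto simp: ZZ_def less_Suc_eq)

lemma FF_deriv: "fps_deriv (FF z j) = - (ZZ z j * FF z j)"
proof (induction j)
  case 0
  have "ZZ z 0 = 0" by (rule fps_ext) (simp add: ZZ_def)
  then show ?case by (simp add: FF_0)
next
  case (Suc j)
  have "fps_deriv (FF z (Suc j)) = EE z (Suc j) * fps_deriv (FF z j) + fps_deriv (EE z (Suc j)) * FF z j"
    unfolding FF_Suc by (rule fps_deriv_mult)
  also have "\<dots> = EE z (Suc j) * (- (ZZ z j * FF z j)) + (- (fps_const (z (Suc j)) * (fps_X ^ j * EE z (Suc j)))) * FF z j"
    using Suc.IH EE_deriv[of "Suc j" z] by simp
  also have "\<dots> = - ((ZZ z j + fps_const (z (Suc j)) * fps_X ^ j) * (EE z (Suc j) * FF z j))"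
    by (simp add: algebra_simps)
  also have "\<dots> = - (ZZ z (Suc j) * FF z (Suc j))" by (simp only: ZZ_Suc FF_Suc)
  finally show ?case .
qed

lemma RR_rec:
  "of_nat (m + 1) * RR z j (m + 1) = - (\<Sum>i=0..m. (if i < j then z (Suc i) else 0) * RR z j (m - i))"
proof -
  have "fps_nth (fps_deriv (FF z j)) m = fps_nth (- (ZZ z j * FF z j)) m" by (simp only: FF_deriv)
  then show ?thesis by (simp add: fps_mult_nth FF_def ZZ_def)
qed



definition GG :: "(nat \<Rightarrow> complex) \<Rightarrow> nat set \<Rightarrow> complex fps" where
  "GG x I = (\<Prod>i\<in>I. 1 - fps_const (x i) * fps_X)"
definition PP :: "(nat \<Rightarrow> complex) \<Rightarrow> nat set \<Rightarrow> complex fps" where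
  "PP x I = Abs_fps (\<lambda>k. \<Sum>i\<in>I. x i ^ (k + 1))"

lemma geo: "(1 - fps_const a * fps_X) * Abs_fps (\<lambda>k. a ^ (k + 1)) = fps_const (a::complex)"
proof (rule fps_ext)
  fix n
  have e: "(1 - fps_const a * fps_X) * Abs_fps (\<lambda>k. a ^ (k + 1)) =
     Abs_fps (\<lambda>k. a ^ (k + 1)) - fps_const a * (fps_X * Abs_fps (\<lambda>k. a ^ (k + 1)))"
    by (simp add: algebra_simps)
  show "fps_nth ((1 - fps_const a * fps_X) * Abs_fps (\<lambda>k. a ^ (k + 1))) n = fps_nth (fps_const a) n"
  proof (cases n)
    case 0 then show ?thesis unfolding e by simp
  next
    case (Suc m) then show ?thesis unfolding e by simp
  qed
qed

lemma GG_deriv: "finite I \<Longrightarrow> fps_deriv (GG x I) = - (PP x I * GG x I)"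
proof (induction I rule: finite_induct)
  case empty
  have "PP x {} = 0" by (rule fps_ext) (simp add: PP_def)
  then show ?case by (simp add: GG_def)
next
  case (insert i I)
  define c where "c = x i"
  define S where "S = Abs_fps (\<lambda>k. c ^ (k + 1))"
  have G: "GG x (insert i I) = (1 - fps_const c * fps_X) * GG x I"
    using insert by (simp add: GG_def c_def)
  have P: "PP x (insert i I) = S + PP x I"
    by (rule fps_ext) (use insert in \<open>simp add: PP_def S_def c_def\<close>)
  have d: "fps_deriv (1 - fps_const c * fps_X) = - fps_const c" by simp
  have "fps_deriv (GG x (insert i I)) = (1 - fps_const c * fps_X) * fps_deriv (GG x I) + fps_deriv (1 - fps_const c * fps_X) * GG x I"
    unfolding G by (rule fps_deriv_mult)
  also have "\<dots> = (1 - fps_const c * fps_X) * (- (PP x I * GG x I)) - fps_const c * GG x I"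
    unfolding d insert.IH by (simp add: algebra_simps del: fps_const_neg)
  also have "\<dots> = - (((1 - fps_const c * fps_X) * S) * GG x I + PP x I * ((1 - fps_const c * fps_X) * GG x I))"
    unfolding S_def geo by (simp add: algebra_simps)
  also have "\<dots> = - (PP x (insert i I) * GG x (insert i I))"
    unfolding P G by (simp add: algebra_simps)
  finally show ?case .
qed

lemma GG_rec:
  assumes "finite I"
  shows "of_nat (m + 1) * fps_nth (GG x I) (m + 1) = - (\<Sum>i=0..m. (\<Sum>l\<in>I. x l ^ (i + 1)) * fps_nth (GG x I) (m - i))"
proof -
  have "fps_nth (fps_deriv (GG x I)) m = fps_nth (- (PP x I * GG x I)) m" by (simp only: GG_deriv[OF assms])
  then show ?thesis by (simp add: fps_mult_nth PP_def)
qed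

lemma GG_0: "fps_nth (GG x I) 0 = 1"
proof (cases "finite I")
  case True then show ?thesis unfolding GG_def by (induction I rule: finite_induct) (simp_all add: fps_mult_nth)
qed (simp add: GG_def)

lemma uniq:
  fixes a b u v :: "nat \<Rightarrow> complex"
  assumes a0: "a 0 = 1" and b0: "b 0 = 1"
    and ra: "\<And>m. m < n \<Longrightarrow> of_nat (m + 1) * a (m + 1) = - (\<Sum>i=0..m. u i * a (m - i))"
    and rb: "\<And>m. m < n \<Longrightarrow> of_nat (m + 1) * b (m + 1) = - (\<Sum>i=0..m. v i * b (m - i))"
  shows "(\<forall>i<n. u i = v i) \<longleftrightarrow> (\<forall>m\<le>n. a m = b m)"
proof
  assume uv: "\<forall>i<n. u i = v i"
  show "\<forall>m\<le>n. a m = b m"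
  proof (intro allI impI)
    fix m assume "m \<le> n"
    then show "a m = b m"
    proof (induction m rule: less_induct)
      case (less m)
      show ?case
      proof (cases m)
        case 0 then show ?thesis using a0 b0 by simp
      next
        case (Suc k)
        then have k: "k < n" using less.prems by simp
        have "of_nat (k + 1) * a (k + 1) = - (\<Sum>i=0..k. u i * a (k - i))" using ra[OF k] .
        also have "\<dots> = - (\<Sum>i=0..k. v i * b (k - i))"
        proof -
          have eqs: "u i * a (k - i) = v i * b (k - i)" if "i \<in> {0..k}" for i
          proof -
            have "u i = v i" using uv k that by simp
            moreover have "a (k - i) = b (k - i)" using less.IH[of "k - i"] Suc less.prems by simp
            ultimately show ?thesis by simp
          qed
          have "(\<Sum>i=0..k. u i * a (k - i)) = (\<Sum>i=0..k. v i * b (k - i))"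
            by (rule sum.cong[OF refl eqs])
          then show ?thesis by simp
        qed
        also have "\<dots> = of_nat (k + 1) * b (k + 1)" using rb[OF k] by simp
        finally have "of_nat (k + 1) * a (k + 1) = of_nat (k + 1) * b (k + 1)" .
        moreover have nz: "(of_nat (k + 1) :: complex) \<noteq> 0" by (simp only: Suc_eq_plus1[symmetric] of_nat_neq_0) simp
        ultimately have "a (k + 1) = b (k + 1)" by (metis mult_cancel_left)
        then show ?thesis using Suc by simp
      qed
    qed
  qed
next
  assume ab: "\<forall>m\<le>n. a m = b m"
  show "\<forall>i<n. u i = v i"
  proof (intro allI impI)
    fix i assume "i < n"
    then show "u i = v i"
    proof (induction i rule: less_induct)
      case (less i)
      have split: "(\<Sum>l=0..i. w l * c (i - l)) = w i * c 0 + (\<Sum>l\<in>{0..<i}. w l * c (i - l))" for w c :: "nat \<Rightarrow> complex"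
        by (simp add: atLeastLessThanSuc_atLeastAtMost[symmetric] sum.atLeast0_lessThan_Suc)
      have "u i * a 0 + (\<Sum>l\<in>{0..<i}. u l * a (i - l)) = - (of_nat (i + 1) * a (i + 1))"
        using ra[OF less.prems] split[of u a] by simp
      also have "\<dots> = - (of_nat (i + 1) * b (i + 1))" using ab less.prems by simp
      also have "\<dots> = v i * b 0 + (\<Sum>l\<in>{0..<i}. v l * b (i - l))"
        using rb[OF less.prems] split[of v b] by simp
      finally have e: "u i * a 0 + (\<Sum>l\<in>{0..<i}. u l * a (i - l)) = v i * b 0 + (\<Sum>l\<in>{0..<i}. v l * b (i - l))" .
      have "(\<Sum>l\<in>{0..<i}. u l * a (i - l)) = (\<Sum>l\<in>{0..<i}. v l * b (i - l))"
      proof (rule sum.cong[OF refl])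
        fix l assume l: "l \<in> {0..<i}"
        then have "u l = v l" using less.IH less.prems by simp
        moreover have "a (i - l) = b (i - l)" using ab less.prems by simp
        ultimately show "u l * a (i - l) = v l * b (i - l)" by simp
      qed
      then show ?case using e a0 b0 by simp
    qed
  qed
qed



definition diagm :: "nat \<Rightarrow> (nat \<Rightarrow> complex) \<Rightarrow> complex mat" where
  "diagm n f = mat n n (\<lambda>(i,j). if i = j then f i else 0)"

lemma diagm_mult: "diagm n f * diagm n g = diagm n (\<lambda>i. f i * g i)"
proof (rule eq_matI)
  fix i j assume i: "i < dim_row (diagm n (\<lambda>i. f i * g i))" and j: "j < dim_col (diagm n (\<lambda>i. f i * g i))"
  then have i': "i < n" and j': "j < n" by (auto simp: diagm_def)
  have "(diagm n f * diagm n g) $$ (i, j) = (\<Sum>k\<in>{0..<n}. (if i = k then f i else 0) * (if k = j then g k else 0))"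
    using i' j' by (simp add: diagm_def index_mult_mat scalar_prod_def)
  also have "\<dots> = (\<Sum>k\<in>{0..<n}. if k = i then (if i = j then f i * g i else 0) else 0)"
    by (intro sum.cong refl) auto
  also have "\<dots> = (if i = j then f i * g i else 0)" using i' by simp
  also have "\<dots> = diagm n (\<lambda>i. f i * g i) $$ (i, j)" using i' j' by (simp add: diagm_def)
  finally show "(diagm n f * diagm n g) $$ (i, j) = diagm n (\<lambda>i. f i * g i) $$ (i, j)" .
qed (auto simp: diagm_def)

lemma one_diagm: "1\<^sub>m n = diagm n (\<lambda>i. 1)"
  by (rule eq_matI) (auto simp: diagm_def)

lemma A0_diagm: "A0 n y = diagm n (\<lambda>i. y)"
  by (rule eq_matI) (auto simp: diagm_def A0_def)

lemma A1_diagm: "A1 n x = diagm n (\<lambda>i. x (Suc i))"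
  by (simp add: diagm_def A1_def)

lemma sum_list_le_length: "set is \<subseteq> {0,1} \<Longrightarrow> sum_list is \<le> length (is::nat list)"
  by (induction "is") auto

lemma foldr_diagm:
  assumes "set is \<subseteq> {0,1}"
  shows "foldr (\<lambda>b M. A_of n y x b * M) is (1\<^sub>m n) =
         diagm n (\<lambda>i. y ^ (length is - sum_list is) * x (Suc i) ^ (sum_list is))"
  using assms
proof (induction "is")
  case Nil
  then show ?case by (simp add: one_diagm)
next
  case (Cons b "is")
  then have IH: "foldr (\<lambda>b M. A_of n y x b * M) is (1\<^sub>m n) =
         diagm n (\<lambda>i. y ^ (length is - sum_list is) * x (Suc i) ^ (sum_list is))" by simp
  have le: "sum_list is \<le> length is" using Cons.prems by (intro sum_list_le_length) simp
  show ?case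
  proof (cases "b = 0")
    case True
    have "Suc (length is) - sum_list is = Suc (length is - sum_list is)" using le by simp
    then show ?thesis using True IH
      by (simp add: A_of_def A0_diagm diagm_mult mult.assoc)
  next
    case False
    then have b: "b = 1" using Cons.prems by simp
    then show ?thesis using IH
      by (simp add: A_of_def A1_diagm diagm_mult algebra_simps)
  qed
qed

lemma trace_diagm: "mat_trace (diagm n f) = (\<Sum>i<n. f i)"
  by (simp add: mat_trace_def diagm_def)

lemma mps_amp_eq:
  assumes "is \<in> basis_strings n"
  shows "mps_amp n y x is = y ^ (n - sum_list is) * (\<Sum>l=1..n. x l ^ sum_list is)"
proof -
  have s: "set is \<subseteq> {0,1}" and l: "length is = n" using assms by (auto simp: basis_strings_def)
  have "mps_amp n y x is = (\<Sum>i<n. y ^ (n - sum_list is) * x (Suc i) ^ (sum_list is))"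
    unfolding mps_amp_def foldr_diagm[OF s] trace_diagm l ..
  also have "\<dots> = y ^ (n - sum_list is) * (\<Sum>l=1..n. x l ^ sum_list is)"
    by (simp add: sum_distrib_left sum.atLeast1_atMost_eq)
  finally show ?thesis .
qed

lemma dicke_sup_eq:
  assumes "is \<in> basis_strings n"
  shows "dicke_sup n d is = d (sum_list is) * complex_of_real (1 / sqrt (real (n choose sum_list is)))"
proof -
  have s: "set is \<subseteq> {0,1}" and l: "length is = n" using assms by (auto simp: basis_strings_def)
  have le: "sum_list is \<le> n" using sum_list_le_length[OF s] l by simp
  have "dicke_sup n d is = (\<Sum>k=0..n. if k = sum_list is then d k * complex_of_real (1 / sqrt (real (n choose k))) else 0)"
    unfolding dicke_sup_def dicke_def by (intro sum.cong refl) auto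
  also have "\<dots> = d (sum_list is) * complex_of_real (1 / sqrt (real (n choose sum_list is)))"
    using le by simp
  finally show ?thesis .
qed

lemma witness_string:
  assumes "k \<le> n"
  shows "replicate k 1 @ replicate (n - k) 0 \<in> basis_strings n"
    and "sum_list (replicate k 1 @ replicate (n - k) (0::nat)) = k"
  using assms by (auto simp: basis_strings_def sum_list_replicate)

lemma match_iff:
  "(\<forall>is\<in>basis_strings n. dicke_sup n d is = mps_amp n y x is) \<longleftrightarrow>
   (\<forall>k\<le>n. d k * complex_of_real (1 / sqrt (real (n choose k))) = y ^ (n - k) * (\<Sum>l=1..n. x l ^ k))"
proof
  assume H: "\<forall>is\<in>basis_strings n. dicke_sup n d is = mps_amp n y x is"
  show "\<forall>k\<le>n. d k * complex_of_real (1 / sqrt (real (n choose k))) = y ^ (n - k) * (\<Sum>l=1..n. x l ^ k)"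
  proof (intro allI impI)
    fix k assume k: "k \<le> n"
    let ?s = "replicate k 1 @ replicate (n - k) (0::nat)"
    have "dicke_sup n d ?s = mps_amp n y x ?s" using H witness_string[OF k] by blast
    then show "d k * complex_of_real (1 / sqrt (real (n choose k))) = y ^ (n - k) * (\<Sum>l=1..n. x l ^ k)"
      using dicke_sup_eq[OF witness_string(1)[OF k]] mps_amp_eq[OF witness_string(1)[OF k]] witness_string(2)[OF k]
      by simp
  qed
next
  assume H: "\<forall>k\<le>n. d k * complex_of_real (1 / sqrt (real (n choose k))) = y ^ (n - k) * (\<Sum>l=1..n. x l ^ k)"
  show "\<forall>is\<in>basis_strings n. dicke_sup n d is = mps_amp n y x is"
  proof
    fix "is" assume is_: "is \<in> basis_strings n"
    have s: "set is \<subseteq> {0,1}" and l: "length is = n" using is_ by (auto simp: basis_strings_def)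
    have le: "sum_list is \<le> n" using sum_list_le_length[OF s] l by simp
    show "dicke_sup n d is = mps_amp n y x is"
      using H le dicke_sup_eq[OF is_] mps_amp_eq[OF is_] by simp
  qed
qed



lemma RR_big: assumes "m \<le> j" shows "RR z j m = RR z m m"
  unfolding RR_def PS_big[OF assms] ..

lemma RR_at0: "RR z j 0 = 1"
proof -
  have e: "lam = {#}" if "set_mset lam \<subseteq> {1..j}" "sum_mset lam = 0" for lam
  proof (rule ccontr)
    assume "lam \<noteq> {#}"
    then obtain p where p: "p \<in># lam" by (meson multiset_nonemptyE)
    then have "p \<ge> 1" using that(1) by auto
    moreover have "p \<le> 0" using mem_le_sum[OF p] that(2) by simp
    ultimately show False by simp
  qed
  have "PS j 0 = {{#}}" unfolding PS_def using e by auto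
  then show ?thesis by (simp add: RR_def ww_def)
qed

definition HH :: "(nat \<Rightarrow> complex) \<Rightarrow> nat \<Rightarrow> complex poly" where
  "HH x n = (\<Prod>i\<in>{1..n}. [:- x i, 1:])"

lemma degree_HH: "degree (HH x n) = n"
proof -
  have "degree (HH x n) = (\<Sum>i\<in>{1..n}. degree [:- x i, 1:])"
    unfolding HH_def by (rule degree_prod_eq_sum_degree) simp
  then show ?thesis by simp
qed

lemma reflect_lin: "reflect_poly [:- a, 1:] = [:1, - (a::complex):]"
  by (rule poly_eqI) (simp add: coeff_reflect_poly coeff_pCons split: nat.split)

lemma GG_poly: "GG x I = fps_of_poly (\<Prod>i\<in>I. [:1, - x i:])"
proof -
  have l: "fps_of_poly [:1, - x i:] = 1 - fps_const (x i) * fps_X" for i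
    by (simp add: fps_of_poly_pCons fps_of_poly_const algebra_simps)
  show ?thesis unfolding GG_def fps_of_poly_prod by (intro prod.cong refl) (simp only: l)
qed

lemma coeff_HH:
  "coeff (HH x n) k = (if k \<le> n then fps_nth (GG x {1..n}) (n - k) else 0)"
proof (cases "k \<le> n")
  case True
  have "fps_nth (GG x {1..n}) (n - k) = coeff (reflect_poly (HH x n)) (n - k)"
    unfolding GG_poly fps_of_poly_nth HH_def reflect_poly_prod reflect_lin ..
  also have "\<dots> = coeff (HH x n) k" using True by (simp add: coeff_reflect_poly degree_HH)
  finally show ?thesis using True by simp
next
  case False
  then show ?thesis using degree_HH[of x n] by (simp add: coeff_eq_0)
qed

lemma coeff_Ppoly:
  "coeff (Ppoly n z) k = (if k \<le> n then fact n * RR z n (n - k) else 0)"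
proof -
  have "coeff (Ppoly n z) k = (\<Sum>m=0..n. if n - m = k then fact n / fact m * Q m z else 0)"
    unfolding Ppoly_def coeff_sum coeff_monom ..
  also have "\<dots> = (if k \<le> n then fact n * RR z n (n - k) else 0)"
  proof (cases "k \<le> n")
    case True
    have "(\<Sum>m=0..n. if n - m = k then fact n / fact m * Q m z else 0) =
          (\<Sum>m=0..n. if m = n - k then fact n / fact m * Q m z else 0)"
      by (intro sum.cong refl) (use True in auto)
    also have "\<dots> = fact n / fact (n - k) * Q (n - k) z" by simp
    also have "\<dots> = fact n * RR z n (n - k)"
      unfolding Q_RR using RR_big[of "n - k" n z] by simp
    finally show ?thesis using True by simp
  next
    case False
    then show ?thesis by (intro trans[OF sum.neutral]) auto
  qed
  finally show ?thesis .
qed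

lemma eqC:
  "(\<forall>k\<in>{1..n}. (\<Sum>l=1..n. x l ^ k) = z k) \<longleftrightarrow> (\<forall>m\<le>n. RR z n m = fps_nth (GG x {1..n}) m)"
proof -
  have "(\<forall>i<n. (if i < n then z (Suc i) else 0) = (\<Sum>l\<in>{1..n}. x l ^ (i + 1))) \<longleftrightarrow>
        (\<forall>m\<le>n. RR z n m = fps_nth (GG x {1..n}) m)"
    by (rule uniq[where a = "RR z n" and b = "\<lambda>m. fps_nth (GG x {1..n}) m"])
       (rule RR_at0, rule GG_0, rule RR_rec, rule GG_rec, simp)
  moreover have "(\<forall>i<n. (if i < n then z (Suc i) else 0) = (\<Sum>l\<in>{1..n}. x l ^ (i + 1))) \<longleftrightarrow>
        (\<forall>k\<in>{1..n}. (\<Sum>l=1..n. x l ^ k) = z k)"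
  proof
    assume H: "\<forall>i<n. (if i < n then z (Suc i) else 0) = (\<Sum>l\<in>{1..n}. x l ^ (i + 1))"
    show "\<forall>k\<in>{1..n}. (\<Sum>l=1..n. x l ^ k) = z k"
    proof
      fix k assume k: "k \<in> {1..n}"
      then obtain i where i: "k = Suc i" "i < n" by (cases k) auto
      then show "(\<Sum>l=1..n. x l ^ k) = z k" using H by simp
    qed
  next
    assume H: "\<forall>k\<in>{1..n}. (\<Sum>l=1..n. x l ^ k) = z k"
    show "\<forall>i<n. (if i < n then z (Suc i) else 0) = (\<Sum>l\<in>{1..n}. x l ^ (i + 1))"
    proof (intro allI impI)
      fix i assume i: "i < n"
      then have "Suc i \<in> {1..n}" by simp
      then have "(\<Sum>l=1..n. x l ^ Suc i) = z (Suc i)" using H by blast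
      then show "(if i < n then z (Suc i) else 0) = (\<Sum>l\<in>{1..n}. x l ^ (i + 1))" using i by simp
    qed
  qed
  ultimately show ?thesis by simp
qed

lemma eqD:
  "(\<forall>m\<le>n. RR z n m = fps_nth (GG x {1..n}) m) \<longleftrightarrow> Ppoly n z = Polynomial.smult (fact n) (HH x n)"
proof
  assume H: "\<forall>m\<le>n. RR z n m = fps_nth (GG x {1..n}) m"
  show "Ppoly n z = Polynomial.smult (fact n) (HH x n)"
  proof (rule poly_eqI)
    fix k
    show "coeff (Ppoly n z) k = coeff (Polynomial.smult (fact n) (HH x n)) k"
      using H by (simp add: coeff_Ppoly coeff_HH)
  qed
next
  assume H: "Ppoly n z = Polynomial.smult (fact n) (HH x n)"
  show "\<forall>m\<le>n. RR z n m = fps_nth (GG x {1..n}) m"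
  proof (intro allI impI)
    fix m assume m: "m \<le> n"
    have "coeff (Ppoly n z) (n - m) = coeff (Polynomial.smult (fact n) (HH x n)) (n - m)" using H by simp
    then have "fact n * RR z n m = fact n * fps_nth (GG x {1..n}) m"
      using m by (simp add: coeff_Ppoly coeff_HH)
    then show "RR z n m = fps_nth (GG x {1..n}) m" by simp
  qed
qed

lemma proots_lin_prod: "proots (\<Prod>a\<in>#M. [:- a, 1:]) = (M :: complex multiset)"
proof (induction M)
  case empty then show ?case by simp
next
  case (add a M)
  have nz: "(\<Prod>a\<in>#M. [:- a, 1:]) \<noteq> 0"
  proof
    assume "(\<Prod>a\<in>#M. [:- a, 1:]) = 0"
    then have "0 \<in># image_mset (\<lambda>a. [:- a, 1:]) M" by (simp only: prod_mset_zero_iff)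
    then show False by auto
  qed
  have "proots (\<Prod>a\<in>#add_mset a M. [:- a, 1:]) = proots ([:- a, 1:] * (\<Prod>a\<in>#M. [:- a, 1:]))" by simp
  also have "\<dots> = proots [:- a, 1:] + proots (\<Prod>a\<in>#M. [:- a, 1:])"
    by (rule proots_mult) (use nz in auto)
  also have "\<dots> = add_mset a M" using add.IH by simp
  finally show ?case .
qed

lemma HH_mset: "HH x n = (\<Prod>a\<in>#image_mset x (mset_set {1..n}). [:- a, 1:])"
  unfolding HH_def prod_unfold_prod_mset by (simp add: image_mset.compositionality comp_def)

lemma HH_nz: "HH x n \<noteq> 0"
proof -
  have "coeff (HH x n) n = 1" by (simp add: coeff_HH GG_0)
  then show ?thesis by auto
qed

lemma degree_Ppoly: "degree (Ppoly n z) = n" and lead_Ppoly: "lead_coeff (Ppoly n z) = fact n"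
proof -
  have c: "coeff (Ppoly n z) n = fact n" by (simp add: coeff_Ppoly RR_at0)
  have "degree (Ppoly n z) \<le> n" by (rule degree_le) (simp add: coeff_Ppoly)
  moreover have "n \<le> degree (Ppoly n z)" by (rule le_degree) (simp add: c)
  ultimately show d: "degree (Ppoly n z) = n" by simp
  show "lead_coeff (Ppoly n z) = fact n" using d c by simp
qed

lemma eqE:
  "Ppoly n z = Polynomial.smult (fact n) (HH x n) \<longleftrightarrow>
   (Ppoly n z \<noteq> 0 \<and> (\<forall>a. count (image_mset x (mset_set {1..n})) a = order a (Ppoly n z)))"
proof
  assume H: "Ppoly n z = Polynomial.smult (fact n) (HH x n)"
  have pr: "proots (HH x n) = image_mset x (mset_set {1..n})" unfolding HH_mset by (rule proots_lin_prod)
  have nz: "Ppoly n z \<noteq> 0" using H HH_nz[of x n] by simp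
  have "proots (Ppoly n z) = image_mset x (mset_set {1..n})" using H pr by simp
  then have "count (image_mset x (mset_set {1..n})) a = order a (Ppoly n z)" for a
    using count_proots[OF nz, of a] by simp
  then show "Ppoly n z \<noteq> 0 \<and> (\<forall>a. count (image_mset x (mset_set {1..n})) a = order a (Ppoly n z))"
    using nz by blast
next
  assume H: "Ppoly n z \<noteq> 0 \<and> (\<forall>a. count (image_mset x (mset_set {1..n})) a = order a (Ppoly n z))"
  then have nz: "Ppoly n z \<noteq> 0" and c: "\<And>a. count (image_mset x (mset_set {1..n})) a = order a (Ppoly n z)" by auto
  have M: "proots (Ppoly n z) = image_mset x (mset_set {1..n})"
    by (rule multiset_eqI) (simp only: count_proots[OF nz] c)
  have "Ppoly n z = Polynomial.smult (lead_coeff (Ppoly n z)) (\<Prod>a\<in>#proots (Ppoly n z). [:- a, 1:])"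
    by (rule complex_poly_decompose_multiset[symmetric])
  also have "\<dots> = Polynomial.smult (fact n) (HH x n)" unfolding M lead_Ppoly HH_mset ..
  finally show "Ppoly n z = Polynomial.smult (fact n) (HH x n)" .
qed



lemma part1_iff:
  fixes n :: nat and d :: "nat \<Rightarrow> complex"
  assumes n1: "n \<ge> 1" and d0: "d 0 \<noteq> 0"
  shows "(\<forall>is\<in>basis_strings n. dicke_sup n d is = mps_amp n y x is)
            \<longleftrightarrow> (y ^ n = d 0 / of_nat n \<and>
                 (\<forall>k\<in>{1..n}. (\<Sum>l=1..n. x l ^ k) =
                     d k / (y ^ (n - k) * complex_of_real (sqrt (real (n choose k))))))"
proof -
  define s where "s k = complex_of_real (sqrt (real (n choose k)))" for k
  have snz: "s k \<noteq> 0" if "k \<le> n" for k using that by (simp add: s_def)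
  have inv: "complex_of_real (1 / sqrt (real (n choose k))) = 1 / s k" for k
    by (simp add: s_def)
  have p0: "(\<Sum>l=1..n. x l ^ 0) = (of_nat n :: complex)" by simp
  have nnz: "(of_nat n :: complex) \<noteq> 0" using n1 by simp
  have s0: "s 0 = 1" by (simp add: s_def)
  have "(\<forall>is\<in>basis_strings n. dicke_sup n d is = mps_amp n y x is) \<longleftrightarrow>
        (\<forall>k\<le>n. d k * (1 / s k) = y ^ (n - k) * (\<Sum>l=1..n. x l ^ k))"
    unfolding match_iff inv ..
  also have "\<dots> \<longleftrightarrow> (y ^ n = d 0 / of_nat n \<and>
                 (\<forall>k\<in>{1..n}. (\<Sum>l=1..n. x l ^ k) = d k / (y ^ (n - k) * s k)))"
  proof
    assume H: "\<forall>k\<le>n. d k * (1 / s k) = y ^ (n - k) * (\<Sum>l=1..n. x l ^ k)"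
    have "d 0 = y ^ n * of_nat n" using H[rule_format, of 0] p0 s0 by simp
    then have yn: "y ^ n = d 0 / of_nat n" using nnz by (simp add: field_simps)
    have ynz: "y \<noteq> 0"
    proof
      assume "y = 0"
      then have "y ^ n = 0" using n1 by simp
      then show False using yn d0 nnz by simp
    qed
    have "(\<Sum>l=1..n. x l ^ k) = d k / (y ^ (n - k) * s k)" if k: "k \<in> {1..n}" for k
    proof -
      have e: "d k * (1 / s k) = y ^ (n - k) * (\<Sum>l=1..n. x l ^ k)" using H k by simp
      have "s k \<noteq> 0" using snz k by simp
      moreover have "y ^ (n - k) \<noteq> 0" using ynz by simp
      ultimately show ?thesis using e by (simp add: field_simps)
    qed
    then show "y ^ n = d 0 / of_nat n \<and> (\<forall>k\<in>{1..n}. (\<Sum>l=1..n. x l ^ k) = d k / (y ^ (n - k) * s k))"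
      using yn by blast
  next
    assume H: "y ^ n = d 0 / of_nat n \<and> (\<forall>k\<in>{1..n}. (\<Sum>l=1..n. x l ^ k) = d k / (y ^ (n - k) * s k))"
    then have yn: "y ^ n = d 0 / of_nat n" by blast
    have ynz: "y \<noteq> 0"
    proof
      assume "y = 0"
      then have "y ^ n = 0" using n1 by simp
      then show False using yn d0 nnz by simp
    qed
    show "\<forall>k\<le>n. d k * (1 / s k) = y ^ (n - k) * (\<Sum>l=1..n. x l ^ k)"
    proof (intro allI impI)
      fix k assume k: "k \<le> n"
      show "d k * (1 / s k) = y ^ (n - k) * (\<Sum>l=1..n. x l ^ k)"
      proof (cases "k = 0")
        case True
        then show ?thesis using yn nnz s0 p0 by simp
      next
        case False
        then have k1: "k \<in> {1..n}" using k by simp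
        then have e: "(\<Sum>l=1..n. x l ^ k) = d k / (y ^ (n - k) * s k)" using H by blast
        have "s k \<noteq> 0" using snz k by simp
        moreover have "y ^ (n - k) \<noteq> 0" using ynz by simp
        ultimately show ?thesis unfolding e by (simp add: field_simps)
      qed
    qed
  qed
  finally show ?thesis unfolding s_def .
qed

theorem lemma3:
  fixes n :: nat and d :: "nat \<Rightarrow> complex"
  assumes "n \<ge> 1" and "d 0 \<noteq> 0"
  shows "(\<forall>(y::complex) (x::nat \<Rightarrow> complex).
            (\<forall>is\<in>basis_strings n. dicke_sup n d is = mps_amp n y x is)
            \<longleftrightarrow> (y ^ n = d 0 / of_nat n \<and>
                 (\<forall>k\<in>{1..n}. (\<Sum>l=1..n. x l ^ k) =
                     d k / (y ^ (n - k) * complex_of_real (sqrt (real (n choose k)))))))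
       \<and> (\<forall>y::complex. y ^ n = d 0 / of_nat n \<longrightarrow>
            (\<forall>x::nat \<Rightarrow> complex.
               (\<forall>is\<in>basis_strings n. dicke_sup n d is = mps_amp n y x is)
               \<longleftrightarrow> (let z = (\<lambda>k. d k / (y ^ (n - k) * complex_of_real (sqrt (real (n choose k)))))
                    in Ppoly n z \<noteq> 0 \<and>
                       (\<forall>a. count (image_mset x (mset_set {1..n})) a = order a (Ppoly n z)))))"
proof (intro conjI allI impI)
  fix y :: complex and x :: "nat \<Rightarrow> complex"
  show "(\<forall>is\<in>basis_strings n. dicke_sup n d is = mps_amp n y x is)
            \<longleftrightarrow> (y ^ n = d 0 / of_nat n \<and>
                 (\<forall>k\<in>{1..n}. (\<Sum>l=1..n. x l ^ k) =
                     d k / (y ^ (n - k) * complex_of_real (sqrt (real (n choose k))))))"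
    by (rule part1_iff[where n=n and d=d and y=y and x=x, OF assms])
next
  fix y :: complex and x :: "nat \<Rightarrow> complex"
  assume yn: "y ^ n = d 0 / of_nat n"
  define z where "z = (\<lambda>k. d k / (y ^ (n - k) * complex_of_real (sqrt (real (n choose k)))))"
  have "(\<forall>is\<in>basis_strings n. dicke_sup n d is = mps_amp n y x is) \<longleftrightarrow>
        (\<forall>k\<in>{1..n}. (\<Sum>l=1..n. x l ^ k) = z k)"
    unfolding part1_iff[where n=n and d=d and y=y and x=x, OF assms] z_def using yn by simp
  also have "\<dots> \<longleftrightarrow> (\<forall>m\<le>n. RR z n m = fps_nth (GG x {1..n}) m)" by (rule eqC)
  also have "\<dots> \<longleftrightarrow> Ppoly n z = Polynomial.smult (fact n) (HH x n)" by (rule eqD)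
  also have "\<dots> \<longleftrightarrow> (Ppoly n z \<noteq> 0 \<and> (\<forall>a. count (image_mset x (mset_set {1..n})) a = order a (Ppoly n z)))"
    by (rule eqE)
  finally show "(\<forall>is\<in>basis_strings n. dicke_sup n d is = mps_amp n y x is)
               \<longleftrightarrow> (let z = (\<lambda>k. d k / (y ^ (n - k) * complex_of_real (sqrt (real (n choose k)))))
                    in Ppoly n z \<noteq> 0 \<and>
                       (\<forall>a. count (image_mset x (mset_set {1..n})) a = order a (Ppoly n z)))"
    unfolding Let_def z_def .
qed


end
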